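(* Let $X$ and $Y$ be quasi-isometric semimetric spaces. If $X$ is quasi-metric, then $Y$ is quasi-metric.
   Context: A semimetric space is a set $X$ with $d:X\times X\to\mathbb{R}^{\ge0}\cup\{\infty\}$ such that $d(x,y)=0$ iff $x=y$ and $d(x,z)\le d(x,y)+d(y,z)$ (no symmetry; $\infty$ absorbs addition and multiplication by positive reals). It is strongly connected if $d(x,y)<\infty$ for all $x,y$, and quasi-metric if it is strongly connected and there exist $1\le\lambda<\infty$, $0\le\epsilon<\infty$ with $d(y,x)\le\lambda d(x,y)+\epsilon$ for all $x,y$. A map $f:X\to X'$ is a quasi-isometry if there are $1\le\lambda<\infty$, $0<\epsilon<\infty$, $0\le\mu<\infty$ with $\frac1\lambda d(x,y)-\epsilon\le d'(f(x),f(y))\le\lambda d(x,y)+\epsilon$ for all $x,y$, and for every $x'\in X'$ some $x\in X$ with $\max(d'(x',f(x)),d'(f(x),x'))\le\mu$; $X$ and $X'$ are quasi-isometric if such a map exists. *)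

theory Defs
  imports Main "HOL-Library.Extended_Real"
begin

text \<open>Distances take values in [0, \<infinity>], modelled as extended reals (ereal);
  in ereal, \<infinity> absorbs addition with nonnegative values and multiplication by positive reals.
  A space is a carrier set X together with a distance function d (only its values on X matter).\<close>

definition semimetric :: "'a set \<Rightarrow> ('a \<Rightarrow> 'a \<Rightarrow> ereal) \<Rightarrow> bool" where
  "semimetric X d \<longleftrightarrow>
     (\<forall>x\<in>X. \<forall>y\<in>X. d x y \<ge> 0 \<and> d x y \<noteq> -\<infinity>) \<and>
     (\<forall>x\<in>X. \<forall>y\<in>X. d x y = 0 \<longleftrightarrow> x = y) \<and>
     (\<forall>x\<in>X. \<forall>y\<in>X. \<forall>z\<in>X. d x z \<le> d x y + d y z)"

definition strongly_connected :: "'a set \<Rightarrow> ('a \<Rightarrow> 'a \<Rightarrow> ereal) \<Rightarrow> bool" where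
  "strongly_connected X d \<longleftrightarrow> (\<forall>x\<in>X. \<forall>y\<in>X. d x y < \<infinity>)"

definition quasi_metric :: "'a set \<Rightarrow> ('a \<Rightarrow> 'a \<Rightarrow> ereal) \<Rightarrow> bool" where
  "quasi_metric X d \<longleftrightarrow> strongly_connected X d \<and>
     (\<exists>lam::real. \<exists>eps::real. 1 \<le> lam \<and> 0 \<le> eps \<and>
        (\<forall>x\<in>X. \<forall>y\<in>X. d y x \<le> ereal lam * d x y + ereal eps))"

definition quasi_isometry ::
  "'a set \<Rightarrow> ('a \<Rightarrow> 'a \<Rightarrow> ereal) \<Rightarrow> 'b set \<Rightarrow> ('b \<Rightarrow> 'b \<Rightarrow> ereal) \<Rightarrow> ('a \<Rightarrow> 'b) \<Rightarrow> bool" where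
  "quasi_isometry X d X' d' f \<longleftrightarrow> f ` X \<subseteq> X' \<and>
     (\<exists>lam::real. \<exists>eps::real. \<exists>mu::real. 1 \<le> lam \<and> 0 < eps \<and> 0 \<le> mu \<and>
        (\<forall>x\<in>X. \<forall>y\<in>X.
            ereal (1 / lam) * d x y - ereal eps \<le> d' (f x) (f y) \<and>
            d' (f x) (f y) \<le> ereal lam * d x y + ereal eps) \<and>
        (\<forall>x'\<in>X'. \<exists>x\<in>X. max (d' x' (f x)) (d' (f x) x') \<le> ereal mu))"

definition quasi_isometric ::
  "'a set \<Rightarrow> ('a \<Rightarrow> 'a \<Rightarrow> ereal) \<Rightarrow> 'b set \<Rightarrow> ('b \<Rightarrow> 'b \<Rightarrow> ereal) \<Rightarrow> bool" where
  "quasi_isometric X d X' d' \<longleftrightarrow> (\<exists>f. quasi_isometry X d X' d' f)"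

end

theory Submission
  imports Defs
begin

lemma fin_ereal: "(a::ereal) \<ge> 0 \<Longrightarrow> a < \<infinity> \<Longrightarrow> a = ereal (real_of_ereal a)"
  by (cases a) auto

theorem corollary2p11:
  fixes X :: "'a set" and d :: "'a \<Rightarrow> 'a \<Rightarrow> ereal"
    and Y :: "'b set" and e :: "'b \<Rightarrow> 'b \<Rightarrow> ereal"
  assumes "semimetric X d" and "semimetric Y e"
    and "quasi_isometric X d Y e"
    and "quasi_metric X d"
  shows "quasi_metric Y e"
proof -
  obtain f where fq: "quasi_isometry X d Y e f" using assms(3) quasi_isometric_def by blast
  obtain lam eps mu where fY: "f ` X \<subseteq> Y" and lam: "1 \<le> lam" and eps: "0 < eps" and mu: "0 \<le> mu"
    and bnd: "\<And>x y. x\<in>X \<Longrightarrow> y\<in>X \<Longrightarrow> ereal (1 / lam) * d x y - ereal eps \<le> e (f x) (f y) \<and>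
            e (f x) (f y) \<le> ereal lam * d x y + ereal eps"
    and cov: "\<And>y. y\<in>Y \<Longrightarrow> \<exists>x\<in>X. max (e y (f x)) (e (f x) y) \<le> ereal mu"
    using fq unfolding quasi_isometry_def by metis
  obtain L E where L: "1 \<le> L" and E: "0 \<le> E" and sym: "\<And>x y. x\<in>X \<Longrightarrow> y\<in>X \<Longrightarrow> d y x \<le> ereal L * d x y + ereal E"
    and dfin: "\<And>x y. x\<in>X \<Longrightarrow> y\<in>X \<Longrightarrow> d x y < \<infinity>"
    using assms(4) unfolding quasi_metric_def strongly_connected_def by metis
  have dpos: "\<And>x y. x\<in>X \<Longrightarrow> y\<in>X \<Longrightarrow> d x y \<ge> 0" using assms(1) unfolding semimetric_def by blast
  have epos: "\<And>x y. x\<in>Y \<Longrightarrow> y\<in>Y \<Longrightarrow> e x y \<ge> 0" using assms(2) unfolding semimetric_def by blast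
  have tri: "\<And>x y z. x\<in>Y \<Longrightarrow> y\<in>Y \<Longrightarrow> z\<in>Y \<Longrightarrow> e x z \<le> e x y + e y z"
    using assms(2) unfolding semimetric_def by blast
  define dr where "dr x y = real_of_ereal (d x y)" for x y
  have dr: "\<And>x y. x\<in>X \<Longrightarrow> y\<in>X \<Longrightarrow> d x y = ereal (dr x y)"
    unfolding dr_def by (rule fin_ereal[OF dpos dfin])
  have drpos: "\<And>x y. x\<in>X \<Longrightarrow> y\<in>X \<Longrightarrow> dr x y \<ge> 0" using dpos dr by force
  have ffin: "e (f x) (f y) < \<infinity>" if "x\<in>X" "y\<in>X" for x y
  proof -
    have "e (f x) (f y) \<le> ereal (lam * dr x y + eps)" using bnd[OF that] dr[OF that] by simp
    thus ?thesis by (rule order.strict_trans1) simp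
  qed
  have cov2: "\<exists>x\<in>X. e y (f x) \<le> ereal mu \<and> e (f x) y \<le> ereal mu" if "y\<in>Y" for y
    using cov[OF that] by auto
  have efin: "e y1 y2 < \<infinity>" if yy: "y1\<in>Y" "y2\<in>Y" for y1 y2
  proof -
    obtain x1 where x1: "x1\<in>X" "e y1 (f x1) \<le> ereal mu" "e (f x1) y1 \<le> ereal mu" using cov2[OF yy(1)] by blast
    obtain x2 where x2: "x2\<in>X" "e y2 (f x2) \<le> ereal mu" "e (f x2) y2 \<le> ereal mu" using cov2[OF yy(2)] by blast
    have f1: "f x1 \<in> Y" "f x2 \<in> Y" using fY x1 x2 by auto
    have "e y1 y2 \<le> e y1 (f x1) + e (f x1) y2" using tri f1 that by blast
    also have "\<dots> \<le> e y1 (f x1) + (e (f x1) (f x2) + e (f x2) y2)"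
      using tri f1 that by (simp add: add_left_mono)
    also have "\<dots> \<le> ereal mu + (ereal (lam * dr x1 x2 + eps) + ereal mu)"
      using x1 x2 bnd[OF x1(1) x2(1)] dr[OF x1(1) x2(1)] by (intro add_mono) auto
    also have "\<dots> < \<infinity>" by simp
    finally show ?thesis .
  qed
  define er where "er x y = real_of_ereal (e x y)" for x y
  have er: "\<And>x y. x\<in>Y \<Longrightarrow> y\<in>Y \<Longrightarrow> e x y = ereal (er x y)"
    unfolding er_def by (rule fin_ereal[OF epos efin])
  have tri': "\<And>x y z. x\<in>Y \<Longrightarrow> y\<in>Y \<Longrightarrow> z\<in>Y \<Longrightarrow> er x z \<le> er x y + er y z"
    using tri er by (metis plus_ereal.simps(1) ereal_less_eq(3))
  have symr: "\<And>x y. x\<in>X \<Longrightarrow> y\<in>X \<Longrightarrow> dr y x \<le> L * dr x y + E"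
    using sym dr by (metis times_ereal.simps(1) plus_ereal.simps(1) ereal_less_eq(3))
  have up: "er (f x) (f y) \<le> lam * dr x y + eps" if "x\<in>X" "y\<in>X" for x y
    using bnd[OF that] dr[OF that] er fY that
    by (metis image_subset_iff times_ereal.simps(1) plus_ereal.simps(1) ereal_less_eq(3))
  have lo: "(1/lam) * dr x y - eps \<le> er (f x) (f y)" if "x\<in>X" "y\<in>X" for x y
  proof -
    have "f x \<in> Y" "f y \<in> Y" using fY that by auto
    hence "ereal (1/lam) * ereal (dr x y) - ereal eps \<le> ereal (er (f x) (f y))"
      using bnd[OF that] dr[OF that] er by metis
    thus ?thesis by simp
  qed
  have lo': "dr x y \<le> lam * (er (f x) (f y) + eps)" if "x\<in>X" "y\<in>X" for x y
  proof -
    have "(1/lam) * dr x y \<le> er (f x) (f y) + eps" using lo[OF that] by simp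
    hence "lam * ((1/lam) * dr x y) \<le> lam * (er (f x) (f y) + eps)"
      using lam by (intro mult_left_mono) auto
    thus ?thesis using lam by simp
  qed
  define Lam where "Lam = lam * L * lam"
  define Eps where "Eps = 2*mu + eps + lam * E + lam * L * lam * (2*mu + eps)"
  have main: "er y2 y1 \<le> Lam * er y1 y2 + Eps" if yy: "y1\<in>Y" "y2\<in>Y" for y1 y2
  proof -
    obtain x1 where x1: "x1\<in>X" "e y1 (f x1) \<le> ereal mu" "e (f x1) y1 \<le> ereal mu" using cov2[OF yy(1)] by blast
    obtain x2 where x2: "x2\<in>X" "e y2 (f x2) \<le> ereal mu" "e (f x2) y2 \<le> ereal mu" using cov2[OF yy(2)] by blast
    have f1: "f x1 \<in> Y" "f x2 \<in> Y" using fY x1 x2 by auto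
    have a1: "er y1 (f x1) \<le> mu" "er (f x1) y1 \<le> mu" using x1 er f1 that by auto
    have a2: "er y2 (f x2) \<le> mu" "er (f x2) y2 \<le> mu" using x2 er f1 that by auto
    have b1: "er y2 y1 \<le> er y2 (f x2) + er (f x2) (f x1) + er (f x1) y1"
      using tri' f1 that by (smt (verit))
    have b2: "er (f x1) (f x2) \<le> er (f x1) y1 + er y1 y2 + er y2 (f x2)"
      using tri' f1 that by (smt (verit))
    have c1: "er (f x2) (f x1) \<le> lam * dr x2 x1 + eps" using up x1 x2 by blast
    have c2: "dr x2 x1 \<le> L * dr x1 x2 + E" using symr x1 x2 by blast
    have c3: "dr x1 x2 \<le> lam * (er (f x1) (f x2) + eps)" using lo' x1 x2 by blast
    have c4: "er (f x1) (f x2) \<le> 2*mu + er y1 y2" using b2 a1 a2 by linarith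
    have "L * dr x1 x2 \<le> L * (lam * (2*mu + er y1 y2 + eps))"
      using c3 c4 L lam by (intro mult_left_mono) (auto intro: order_trans mult_left_mono)
    hence "dr x2 x1 \<le> L * lam * (2*mu + er y1 y2 + eps) + E" using c2 by (simp add: algebra_simps)
    hence "lam * dr x2 x1 \<le> lam * (L * lam * (2*mu + er y1 y2 + eps) + E)"
      using lam by (intro mult_left_mono) auto
    thus ?thesis using b1 a1 a2 c1 unfolding Lam_def Eps_def by (simp add: algebra_simps)
  qed
  show ?thesis unfolding quasi_metric_def strongly_connected_def
  proof (intro conjI ballI exI)
    show "e x y < \<infinity>" if "x\<in>Y" "y\<in>Y" for x y using efin that by blast
    show "1 \<le> Lam" using lam L unfolding Lam_def by (metis mult_ge1_I)
    show "0 \<le> Eps" using lam L mu eps E unfolding Eps_def by simp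
    show "e y x \<le> ereal Lam * e x y + ereal Eps" if "x\<in>Y" "y\<in>Y" for x y
      using main[OF that] er that by simp
  qed
qed

end
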